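(* For every $\zeta\in\{0,1\}^H$, every $L>0$ and every $K\ge L+2$: on the event that $D^\zeta_K$ is $L$-thin in $H$, we have $\Delta^\zeta\subset D^\zeta_K$. In particular, if $D^\zeta_K$ is $L$-thin in $H$, then $\Delta^\zeta$ is $L$-thin in $H$.
   Context: Fix $\lambda>0$, $d\ge2$, $H=\{0,1\}^d\subset\mathbb{Z}^d$; for $x\in H$ let $\mathcal{N}_{H,x}$ be the set of nearest neighbours of $x$ (in $\mathbb{Z}^d$) lying in $H$. Each site carries independent Poisson processes of rate $1$ (down marks) and rate $\lambda$ (up marks), independent over sites. For $\zeta\in\{0,1\}^H$, the threshold $2$ contact process $(\eta^\zeta_{H;t})_{t\ge0}$ on $H$ starts from $\zeta$; at a down mark at $x$ the spin becomes $0$; at an up mark at $x$ at time $t$ the spin becomes $1$ if at least $2$ sites of $\mathcal{N}_{H,x}$ are in state $1$ just before $t$. The independent flip process $(\pi^\zeta_{H;t})$ starts from $\zeta$ and sets the spin at $x$ to $0$ at each down mark and to $1$ at each up mark at $x$. $\Delta^\zeta=\bigcup_{t\in[0,d^2]}\{x\in H:\eta^\zeta_{H;t}(x)\ne\pi^\zeta_{H;t}(x)\}$. A site $x\in H$ is $(\zeta,K)$-dangerous if there is some $t\in[0,d^2]$ at which fewer than $K$ sites of $\mathcal{N}_{H,x}$ are in state $1$ in $\pi^\zeta_{H;t}$; $D^\zeta_K$ is the set of $(\zeta,K)$-dangerous sites. A set $S$ is $L$-thin in $H$ if $|S\cap\mathcal{N}_{H,x}|\le L$ for all $x\in H$. 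*)

theory Defs
  imports Complex_Main
begin

type_synonym site = "nat \<Rightarrow> int"
type_synonym config = "site \<Rightarrow> bool"   (* True = spin 1, False = spin 0 *)

definition cube :: "nat \<Rightarrow> site set" where
  "cube d = {x. (\<forall>i<d. x i = 0 \<or> x i = 1) \<and> (\<forall>i\<ge>d. x i = 0)}"

definition nbrs :: "nat \<Rightarrow> site \<Rightarrow> site set" where
  "nbrs d x = {y \<in> cube d. (\<Sum>i<d. \<bar>x i - y i\<bar>) = 1}"

text \<open>Almost-sure properties of a realisation of the Poisson clocks: mark times are
  positive, locally finite, and no two marks (of any type, at any sites of H) coincide.\<close>
definition generic_marks :: "nat \<Rightarrow> (site \<Rightarrow> real set) \<Rightarrow> (site \<Rightarrow> real set) \<Rightarrow> bool" where
  "generic_marks d dn up \<longleftrightarrow>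
     (\<forall>x\<in>cube d. dn x \<subseteq> {0<..} \<and> up x \<subseteq> {0<..}) \<and>
     (\<forall>x\<in>cube d. \<forall>t. finite (dn x \<inter> {..t}) \<and> finite (up x \<inter> {..t})) \<and>
     (\<forall>x\<in>cube d. \<forall>y\<in>cube d. dn x \<inter> up y = {} \<and>
        (x \<noteq> y \<longrightarrow> dn x \<inter> dn y = {} \<and> up x \<inter> up y = {}))"

definition mark_times :: "nat \<Rightarrow> (site \<Rightarrow> real set) \<Rightarrow> (site \<Rightarrow> real set) \<Rightarrow> real set" where
  "mark_times d dn up = (\<Union>x\<in>cube d. dn x \<union> up x)"

definition mark_step ::
  "nat \<Rightarrow> (site \<Rightarrow> real set) \<Rightarrow> (site \<Rightarrow> real set) \<Rightarrow> (config \<Rightarrow> site \<Rightarrow> bool)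
     \<Rightarrow> config \<Rightarrow> real \<Rightarrow> config" where
  "mark_step d dn up rule c tau =
     (\<lambda>x. if x \<in> cube d \<and> tau \<in> dn x then False
          else if x \<in> cube d \<and> tau \<in> up x then rule c x
          else c x)"

text \<open>State at time t: apply all marks in [0,t] in chronological order (right-continuous).\<close>
definition run ::
  "nat \<Rightarrow> (site \<Rightarrow> real set) \<Rightarrow> (site \<Rightarrow> real set) \<Rightarrow> (config \<Rightarrow> site \<Rightarrow> bool)
     \<Rightarrow> config \<Rightarrow> real \<Rightarrow> config" where
  "run d dn up rule \<zeta> t =
     foldl (mark_step d dn up rule) \<zeta> (sorted_list_of_set (mark_times d dn up \<inter> {0..t}))"

definition contact2 :: "nat \<Rightarrow> (site \<Rightarrow> real set) \<Rightarrow> (site \<Rightarrow> real set) \<Rightarrow> config \<Rightarrow> real \<Rightarrow> config" where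
  "contact2 d dn up \<zeta> t = run d dn up (\<lambda>c x. c x \<or> 2 \<le> card {y \<in> nbrs d x. c y}) \<zeta> t"

definition flipproc :: "nat \<Rightarrow> (site \<Rightarrow> real set) \<Rightarrow> (site \<Rightarrow> real set) \<Rightarrow> config \<Rightarrow> real \<Rightarrow> config" where
  "flipproc d dn up \<zeta> t = run d dn up (\<lambda>c x. True) \<zeta> t"

definition Delta :: "nat \<Rightarrow> (site \<Rightarrow> real set) \<Rightarrow> (site \<Rightarrow> real set) \<Rightarrow> config \<Rightarrow> site set" where
  "Delta d dn up \<zeta> = {x \<in> cube d. \<exists>t\<in>{0..real (d^2)}. contact2 d dn up \<zeta> t x \<noteq> flipproc d dn up \<zeta> t x}"

definition dangerous :: "nat \<Rightarrow> (site \<Rightarrow> real set) \<Rightarrow> (site \<Rightarrow> real set) \<Rightarrow> config \<Rightarrow> nat \<Rightarrow> site set" where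
  "dangerous d dn up \<zeta> K = {x \<in> cube d. \<exists>t\<in>{0..real (d^2)}. card {y \<in> nbrs d x. flipproc d dn up \<zeta> t y} < K}"

definition thin :: "nat \<Rightarrow> site set \<Rightarrow> nat \<Rightarrow> bool" where
  "thin d S L \<longleftrightarrow> (\<forall>x\<in>cube d. card (S \<inter> nbrs d x) \<le> L)"

end

theory Submission
  imports Defs
begin

lemma finite_cube: "finite (cube d)"
proof -
  have "inj_on (\<lambda>x. {i. i<d \<and> x i = 1}) (cube d)"
  proof (rule inj_onI)
    fix x y assume x: "x \<in> cube d" and y: "y \<in> cube d"
      and e: "{i. i<d \<and> x i = 1} = {i. i<d \<and> y i = 1}"
    show "x = y"
    proof
      fix i
      show "x i = y i"
      proof (cases "i < d")
        case True
        with x y have "x i = 0 \<or> x i = 1" "y i = 0 \<or> y i = 1" by (auto simp: cube_def)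
        moreover have "x i = 1 \<longleftrightarrow> y i = 1" using e True by blast
        ultimately show ?thesis by auto
      next
        case False
        with x y show ?thesis by (auto simp: cube_def)
      qed
    qed
  qed
  then show ?thesis by (rule inj_on_finite[where B="Pow {..<d}"]) auto
qed

lemma finite_nbrs: "finite (nbrs d x)"
  using finite_cube by (rule finite_subset[rotated]) (auto simp: nbrs_def)

lemma finite_marks:
  assumes "generic_marks d dn up"
  shows "finite (mark_times d dn up \<inter> {0..t})"
proof -
  have "mark_times d dn up \<inter> {0..t} \<subseteq> (\<Union>x\<in>cube d. (dn x \<inter> {..t}) \<union> (up x \<inter> {..t}))"
    by (auto simp: mark_times_def)
  moreover have "finite (\<Union>x\<in>cube d. (dn x \<inter> {..t}) \<union> (up x \<inter> {..t}))"
    using assms finite_cube by (auto simp: generic_marks_def)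
  ultimately show ?thesis by (rule finite_subset)
qed

lemma marks_pos:
  assumes "generic_marks d dn up"
  shows "mark_times d dn up \<subseteq> {0<..}"
  using assms by (auto simp: generic_marks_def mark_times_def)

lemma sl_snoc:
  fixes A :: "real set"
  assumes "finite A" "a \<in> A" "\<forall>b\<in>A. b \<le> a"
  shows "sorted_list_of_set A = sorted_list_of_set (A - {a}) @ [a]"
proof -
  let ?l = "sorted_list_of_set (A - {a}) @ [a]"
  have "sorted_wrt (<) (sorted_list_of_set (A - {a}))" using assms by simp
  moreover have "\<forall>b\<in>A - {a}. b < a" using assms by force
  ultimately have s: "sorted_wrt (<) ?l" using assms by (auto simp: sorted_wrt_append)
  have st: "set ?l = A" using assms by auto
  have "length ?l = card A" using assms
    by (simp add: card_Diff_singleton) (metis Suc_pred card_gt_0_iff empty_iff)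
  with s st show ?thesis using sorted_list_of_set_unique[of A ?l] assms by auto
qed

lemma nbrs_sub: "nbrs d x \<subseteq> cube d"
  unfolding nbrs_def by blast

lemma step:
  assumes inv: "\<forall>y\<in>cube d. ce y \<noteq> cp y \<longrightarrow> y \<in> D"
    and thinD: "\<forall>x\<in>cube d. card (D \<inter> nbrs d x) \<le> L"
    and KL: "K \<ge> L+2"
    and many: "\<forall>x\<in>cube d - D. K \<le> card {y\<in>nbrs d x. cp y}"
  shows "\<forall>y\<in>cube d. mark_step d dn up (\<lambda>c x. c x \<or> 2 \<le> card {y \<in> nbrs d x. c y}) ce a y
            \<noteq> mark_step d dn up (\<lambda>c x. True) cp a y \<longrightarrow> y\<in>D"
proof (intro ballI impI)
  fix y assume y: "y \<in> cube d"
    and ne: "mark_step d dn up (\<lambda>c x. c x \<or> 2 \<le> card {y \<in> nbrs d x. c y}) ce a y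
            \<noteq> mark_step d dn up (\<lambda>c x. True) cp a y"
  show "y \<in> D"
  proof (rule ccontr)
    assume nD: "y \<notin> D"
    let ?B = "{z\<in>nbrs d y. cp z}"
    have fB: "finite ?B" using finite_nbrs by auto
    have sub: "?B - D \<subseteq> {z\<in>nbrs d y. ce z}"
      using inv nbrs_sub[of d y] by blast
    have "card ?B = card ((?B - D) \<union> (?B \<inter> D))" by (rule arg_cong[where f=card]) blast
    also have "\<dots> \<le> card (?B - D) + card (?B \<inter> D)" by (rule card_Un_le)
    finally have "card ?B \<le> card (?B - D) + card (?B \<inter> D)" .
    moreover have "card (?B \<inter> D) \<le> card (D \<inter> nbrs d y)"
      by (rule card_mono) (use finite_nbrs in auto)
    moreover have "card (?B - D) \<le> card {z\<in>nbrs d y. ce z}"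
      by (rule card_mono[OF _ sub]) (use finite_nbrs in auto)
    moreover have "K \<le> card ?B" using many y nD by blast
    moreover have "card (D \<inter> nbrs d y) \<le> L" using thinD y by blast
    ultimately have "2 \<le> card {z\<in>nbrs d y. ce z}" using KL by linarith
    then have c2: "2 \<le> card {z\<in>nbrs d y. ce z}" .
    have eqy: "ce y = cp y" using inv y nD by blast
    show False
    proof (cases "a \<in> dn y")
      case True then show False using ne y by (simp add: mark_step_def)
    next
      case F: False
      show False
      proof (cases "a \<in> up y")
        case True then show False using ne y F c2 by (simp add: mark_step_def)
      next
        case False then show False using ne y F eqy by (simp add: mark_step_def)
      qed
    qed
  qed
qed

lemma inv_run:
  assumes gm: "generic_marks d dn up"
    and thinD: "\<forall>x\<in>cube d. card (D \<inter> nbrs d x) \<le> L"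
    and KL: "K \<ge> L+2"
    and notdang: "\<forall>x\<in>cube d - D. \<forall>t\<in>{0..T}. K \<le> card {y\<in>nbrs d x. flipproc d dn up \<zeta> t y}"
  shows "t \<in> {0..T} \<Longrightarrow> \<forall>y\<in>cube d. contact2 d dn up \<zeta> t y \<noteq> flipproc d dn up \<zeta> t y \<longrightarrow> y \<in> D"
proof (induction "card (mark_times d dn up \<inter> {0..t})" arbitrary: t rule: less_induct)
  case less
  let ?A = "mark_times d dn up \<inter> {0..t}"
  show ?case
  proof (cases "?A = {}")
    case True then show ?thesis by (simp add: contact2_def flipproc_def run_def)
  next
    case False
    define a where "a = Max ?A"
    have fin: "finite ?A" using finite_marks[OF gm] .
    have aA: "a \<in> ?A" using Max_in[OF fin False] a_def by simp
    have amax: "\<forall>b\<in>?A. b \<le> a" using fin a_def by simp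
    define A' where "A' = ?A - {a}"
    define t' where "t' = (if A' = {} then 0 else Max A')"
    have finA': "finite A'" using fin A'_def by simp
    have t'le: "0 \<le> t' \<and> t' \<le> t"
    proof (cases "A' = {}")
      case True then show ?thesis using less.prems by (simp add: t'_def)
    next
      case F: False
      have "Max A' \<in> A'" using Max_in[OF finA' F] .
      then show ?thesis using F by (auto simp: t'_def A'_def)
    qed
    have t'lt: "A' \<noteq> {} \<Longrightarrow> t' < a"
    proof -
      assume F: "A' \<noteq> {}"
      have "Max A' \<in> A'" using Max_in[OF finA' F] .
      then show "t' < a" using F amax by (force simp: t'_def A'_def)
    qed
    have A'eq: "mark_times d dn up \<inter> {0..t'} = A'"
    proof (cases "A' = {}")
      case True
      then show ?thesis using marks_pos[OF gm] by (auto simp: t'_def)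
    next
      case F: False
      show ?thesis
      proof
        show "mark_times d dn up \<inter> {0..t'} \<subseteq> A'"
          using t'le t'lt[OF F] by (auto simp: A'_def)
        show "A' \<subseteq> mark_times d dn up \<inter> {0..t'}"
        proof
          fix b assume b: "b \<in> A'"
          then have "b \<le> Max A'" using finA' by simp
          then show "b \<in> mark_times d dn up \<inter> {0..t'}" using b F by (auto simp: t'_def A'_def)
        qed
      qed
    qed
    have cl: "card A' < card ?A" unfolding A'_def by (rule card_Diff1_less[OF fin aA])
    have t'T: "t' \<in> {0..T}" using t'le less.prems by auto
    have IH: "\<forall>y\<in>cube d. contact2 d dn up \<zeta> t' y \<noteq> flipproc d dn up \<zeta> t' y \<longrightarrow> y \<in> D"
      using less.hyps[of t'] cl A'eq t'T by simp
    have sl: "sorted_list_of_set ?A = sorted_list_of_set (mark_times d dn up \<inter> {0..t'}) @ [a]"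
      using sl_snoc[OF fin aA amax] A'eq A'_def by simp
    have e1: "contact2 d dn up \<zeta> t = mark_step d dn up (\<lambda>c x. c x \<or> 2 \<le> card {y \<in> nbrs d x. c y}) (contact2 d dn up \<zeta> t') a"
      by (simp add: contact2_def run_def sl)
    have e2: "flipproc d dn up \<zeta> t = mark_step d dn up (\<lambda>c x. True) (flipproc d dn up \<zeta> t') a"
      by (simp add: flipproc_def run_def sl)
    have many: "\<forall>x\<in>cube d - D. K \<le> card {y\<in>nbrs d x. flipproc d dn up \<zeta> t' y}"
      using notdang t'T by blast
    show ?thesis unfolding e1 e2 by (rule step[OF IH thinD KL many])
  qed
qed

theorem lemma3p1:
  fixes d L K :: nat and \<zeta> :: config and dn up :: "site \<Rightarrow> real set"
  assumes "d \<ge> 2" and "L > 0" and "K \<ge> L + 2"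
    and "generic_marks d dn up"
    and "thin d (dangerous d dn up \<zeta> K) L"
  shows "Delta d dn up \<zeta> \<subseteq> dangerous d dn up \<zeta> K \<and> thin d (Delta d dn up \<zeta>) L"
proof -
  let ?D = "dangerous d dn up \<zeta> K"
  have thinD: "\<forall>x\<in>cube d. card (?D \<inter> nbrs d x) \<le> L" using assms(5) by (simp add: thin_def)
  have nd: "\<forall>x\<in>cube d - ?D. \<forall>t\<in>{0..real (d^2)}. K \<le> card {y\<in>nbrs d x. flipproc d dn up \<zeta> t y}"
    by (auto simp: dangerous_def not_less)
  have sub: "Delta d dn up \<zeta> \<subseteq> ?D"
  proof
    fix x assume "x \<in> Delta d dn up \<zeta>"
    then have "x \<in> cube d \<and> (\<exists>t\<in>{0..real (d^2)}. contact2 d dn up \<zeta> t x \<noteq> flipproc d dn up \<zeta> t x)"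
      unfolding Delta_def mem_Collect_eq by blast
    then obtain t where x: "x \<in> cube d" and t: "t \<in> {0..real (d^2)}"
      and ne: "contact2 d dn up \<zeta> t x \<noteq> flipproc d dn up \<zeta> t x" by blast
    show "x \<in> ?D" using inv_run[OF assms(4) thinD assms(3) nd t] x ne by blast
  qed
  have "thin d (Delta d dn up \<zeta>) L"
    unfolding thin_def
  proof
    fix x assume x: "x \<in> cube d"
    have "card (Delta d dn up \<zeta> \<inter> nbrs d x) \<le> card (?D \<inter> nbrs d x)"
      by (rule card_mono) (use finite_nbrs sub in auto)
    then show "card (Delta d dn up \<zeta> \<inter> nbrs d x) \<le> L" using thinD x by force
  qed
  with sub show ?thesis by blast
qed

end
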